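(* Consider learning a concept $c$ with the 1-nearest neighbor rule on a metric space $(\mathcal{X},\rho)$. If $U\subset\mathcal{X}$ is a mutually-labeling set for $c$ and $x_t\in U$ for some time $t$, then for every $\tau>t$ the hypothesis $h_\tau$ satisfies $h_\tau(x)=c(x)$ for all $x\in U$. Consequently $U$ is a locally learned set for $c$.
   Context: Margin: $m_c(x)=\inf_{x':c(x')\ne c(x)}\rho(x,x')$. A set $U$ is mutually-labeling for $c$ if $\rho(x,x')<m_c(x)$ for all $x,x'\in U$. The 1-nearest neighbor hypothesis at time $\tau$ is $h_\tau(x)=c(x_{\sigma})$ with $\sigma\in\arg\min_{s<\tau}\rho(x,x_s)$ (ties arbitrary). A set $U$ is locally learned for $c$ if for every sequence $(x_t)_t$, either $x_t\in U$ finitely often or $\sup_{x\in U}\mathcal{E}_t(x)\to0$, where $\mathcal{E}_t(x)=\ell(x,c(x),h_t(x))$ for a non-negative bounded loss with $\ell(x,y,y)=0$. *)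

theory Defs
  imports "HOL-Analysis.Analysis"
begin

text \<open>Margin of x for concept c (value in ereal, so that it is +infinity when
  no point carries a different label).\<close>
definition margin :: "('a::metric_space \<Rightarrow> 'b) \<Rightarrow> 'a \<Rightarrow> ereal" where
  "margin c x = (INF x'\<in>{x'. c x' \<noteq> c x}. ereal (dist x x'))"

definition mutually_labeling :: "('a::metric_space \<Rightarrow> 'b) \<Rightarrow> 'a set \<Rightarrow> bool" where
  "mutually_labeling c U \<longleftrightarrow> (\<forall>x\<in>U. \<forall>x'\<in>U. ereal (dist x x') < margin c x)"

definition is_1nn_hyp :: "('a::metric_space \<Rightarrow> 'b) \<Rightarrow> (nat \<Rightarrow> 'a) \<Rightarrow> (nat \<Rightarrow> 'a \<Rightarrow> 'b) \<Rightarrow> bool" where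
  "is_1nn_hyp c xs h \<longleftrightarrow>
     (\<forall>\<tau>>0. \<forall>x. \<exists>\<sigma><\<tau>. (\<forall>s<\<tau>. dist x (xs \<sigma>) \<le> dist x (xs s)) \<and> h \<tau> x = c (xs \<sigma>))"

definition admissible_loss :: "('a \<Rightarrow> 'b \<Rightarrow> 'b \<Rightarrow> real) \<Rightarrow> bool" where
  "admissible_loss l \<longleftrightarrow> (\<forall>x y y'. 0 \<le> l x y y') \<and> (\<exists>B. \<forall>x y y'. l x y y' \<le> B)
      \<and> (\<forall>x y. l x y y = 0)"

definition locally_learned :: "('a \<Rightarrow> 'b \<Rightarrow> 'b \<Rightarrow> real) \<Rightarrow> ('a::metric_space \<Rightarrow> 'b) \<Rightarrow> 'a set \<Rightarrow> bool" where
  "locally_learned l c U \<longleftrightarrow>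
     (\<forall>xs h. is_1nn_hyp c xs h \<longrightarrow>
        finite {t. xs t \<in> U} \<or> ((\<lambda>t. SUP x\<in>U. l x (c x) (h t x)) \<longlonglongrightarrow> 0))"

end

theory Submission
  imports Defs
begin

lemma key:
  assumes ml: "mutually_labeling c U" and xt: "xs t \<in> U" and h: "is_1nn_hyp c xs h"
    and tau: "\<tau> > t" and x: "x \<in> U"
  shows "h \<tau> x = c x"
proof -
  from h tau obtain \<sigma> where s: "\<sigma> < \<tau>" "\<forall>s<\<tau>. dist x (xs \<sigma>) \<le> dist x (xs s)"
    "h \<tau> x = c (xs \<sigma>)" unfolding is_1nn_hyp_def by (metis gr_implies_not0 neq0_conv)
  have d: "dist x (xs \<sigma>) \<le> dist x (xs t)" using s tau by auto
  have m: "ereal (dist x (xs t)) < margin c x" using ml x xt unfolding mutually_labeling_def by auto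
  show ?thesis
  proof (rule ccontr)
    assume "h \<tau> x \<noteq> c x"
    hence "c (xs \<sigma>) \<noteq> c x" using s by simp
    hence "margin c x \<le> ereal (dist x (xs \<sigma>))" unfolding margin_def by (auto intro: INF_lower)
    with m d show False by (metis ereal_less_eq(3) leD order_trans)
  qed
qed

theorem lemma5:
  fixes c :: "'a::metric_space \<Rightarrow> 'b" and U :: "'a set"
    and xs :: "nat \<Rightarrow> 'a" and t :: nat
  assumes "mutually_labeling c U"
  shows "(xs t \<in> U \<longrightarrow> (\<forall>h. is_1nn_hyp c xs h \<longrightarrow> (\<forall>\<tau>>t. \<forall>x\<in>U. h \<tau> x = c x)))
       \<and> (\<forall>l :: 'a \<Rightarrow> 'b \<Rightarrow> 'b \<Rightarrow> real. admissible_loss l \<longrightarrow> locally_learned l c U)"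
proof (intro conjI impI allI)
  fix h \<tau> x assume "xs t \<in> U" "is_1nn_hyp c xs h" "\<tau> > t" 
  then show "\<forall>x\<in>U. h \<tau> x = c x" using key[OF assms] by blast
next
  fix l :: "'a \<Rightarrow> 'b \<Rightarrow> 'b \<Rightarrow> real" assume l: "admissible_loss l"
  show "locally_learned l c U" unfolding locally_learned_def
  proof (intro allI impI)
    fix xs' h assume h: "is_1nn_hyp c xs' h"
    show "finite {t. xs' t \<in> U} \<or> (\<lambda>t. SUP x\<in>U. l x (c x) (h t x)) \<longlonglongrightarrow> 0"
    proof (cases "{t. xs' t \<in> U} = {}")
      case True then show ?thesis by simp
    next
      case False
      then obtain t0 where t0: "xs' t0 \<in> U" by auto
      have "\<forall>\<^sub>F \<tau> in sequentially. (SUP x\<in>U. l x (c x) (h \<tau> x)) = 0"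
      proof (rule eventually_sequentiallyI[of "Suc t0"])
        fix \<tau> assume "Suc t0 \<le> \<tau>"
        hence "\<forall>x\<in>U. h \<tau> x = c x" using key[OF assms t0 h] by auto
        hence "(\<lambda>x. l x (c x) (h \<tau> x)) ` U = {0}" using l t0
          unfolding admissible_loss_def by auto
        thus "(SUP x\<in>U. l x (c x) (h \<tau> x)) = 0" by simp
      qed
      hence "(\<lambda>t. SUP x\<in>U. l x (c x) (h t x)) \<longlonglongrightarrow> 0"
        by (rule tendsto_eventually)
      thus ?thesis by simp
    qed
  qed
qed

end
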